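(* Let $M$ be a metric structure and $\phi(x_1,\dots,x_n)$ a $[0,1]$-valued definable predicate. Then $\phi$ has the strong Erdős–Hajnal property if and only if for all $0\leq r<s\leq 1$ there is some $\delta>0$ such that if $A_1,\dots,A_n$ are finite subsets of $M^{x_1},\dots,M^{x_n}$ respectively, then there are $B_i\subseteq A_i$ with $|B_i|\geq\delta|A_i|$ such that either $\phi(b)<s$ for all $b\in B_1\times\dots\times B_n$, or $\phi(b)>r$ for all $b\in B_1\times\dots\times B_n$.
   Context: $\phi$ has the strong Erdős–Hajnal property if for every $\varepsilon>0$ there is $\delta>0$ such that for all finite $A_i\subseteq M^{x_i}$ there are $B_i\subseteq A_i$ with $|B_i|\geq\delta|A_i|$ such that $|\phi(a)-\phi(a')|\leq\varepsilon$ for all $a,a'\in B_1\times\dots\times B_n$. *)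

theory Defs
  imports Complex_Main "HOL-Library.FuncSet"
begin

definition tuples :: "'m set \<Rightarrow> nat \<Rightarrow> 'm list set" where
  "tuples M k = {xs. length xs = k \<and> set xs \<subseteq> M}"

text \<open>A point of M^{x_1} \<times> ... \<times> M^{x_n} is an extensional function on {..<n}
  (index i stands for the paper's x_{i+1}); phi takes such a point.\<close>
definition strong_EH ::
  "'m set \<Rightarrow> nat \<Rightarrow> (nat \<Rightarrow> nat) \<Rightarrow> ((nat \<Rightarrow> 'm list) \<Rightarrow> real) \<Rightarrow> bool" where
  "strong_EH M n k \<phi> \<longleftrightarrow>
     (\<forall>\<epsilon>>0. \<exists>\<delta>>0. \<forall>A. (\<forall>i<n. finite (A i) \<and> A i \<subseteq> tuples M (k i)) \<longrightarrow>
        (\<exists>B. (\<forall>i<n. B i \<subseteq> A i \<and> real (card (B i)) \<ge> \<delta> * real (card (A i))) \<and>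
             (\<forall>a\<in>PiE {..<n} B. \<forall>a'\<in>PiE {..<n} B. \<bar>\<phi> a - \<phi> a'\<bar> \<le> \<epsilon>)))"

end

theory Submission
  imports Defs
begin

definition adm :: "'m set \<Rightarrow> nat \<Rightarrow> (nat \<Rightarrow> nat) \<Rightarrow> (nat \<Rightarrow> 'm list set) \<Rightarrow> bool" where
  "adm M n k A \<longleftrightarrow> (\<forall>i<n. finite (A i) \<and> A i \<subseteq> tuples M (k i))"

definition Qrs :: "nat \<Rightarrow> ((nat \<Rightarrow> 'm list) \<Rightarrow> real) \<Rightarrow> real \<Rightarrow> real \<Rightarrow> (nat \<Rightarrow> 'm list set) \<Rightarrow> bool" where
  "Qrs n \<phi> r s B \<longleftrightarrow> ((\<forall>b\<in>PiE {..<n} B. \<phi> b < s) \<or> (\<forall>b\<in>PiE {..<n} B. \<phi> b > r))"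

lemma Qrs_mono:
  assumes "Qrs n \<phi> r s B" "\<forall>i<n. B' i \<subseteq> B i"
  shows "Qrs n \<phi> r s B'"
proof -
  have "PiE {..<n} B' \<subseteq> PiE {..<n} B" using assms(2) by (intro PiE_mono) auto
  then show ?thesis using assms(1) unfolding Qrs_def by blast
qed

lemma iter:
  assumes "\<forall>p\<in>set L. \<exists>\<delta>>0. \<forall>A. adm M n k A \<longrightarrow>
      (\<exists>B. (\<forall>i<n. B i \<subseteq> A i \<and> real (card (B i)) \<ge> \<delta> * real (card (A i))) \<and> Qrs n \<phi> (fst p) (snd p) B)"
  shows "\<exists>\<delta>>0. \<forall>A. adm M n k A \<longrightarrow>
      (\<exists>B. (\<forall>i<n. B i \<subseteq> A i \<and> real (card (B i)) \<ge> \<delta> * real (card (A i))) \<and>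
         (\<forall>p\<in>set L. Qrs n \<phi> (fst p) (snd p) B))"
  using assms
proof (induction L)
  case Nil
  show ?case
  proof (intro exI[of _ 1] conjI allI impI)
    fix A :: "nat \<Rightarrow> 'a list set"
    show "\<exists>B. (\<forall>i<n. B i \<subseteq> A i \<and> 1 * real (card (A i)) \<le> real (card (B i))) \<and>
         (\<forall>p\<in>set []. Qrs n \<phi> (fst p) (snd p) B)"
      by (intro exI[of _ A]) simp
  qed simp
next
  case (Cons p L)
  have pp: "p \<in> set (p # L)" by simp
  from bspec[OF Cons.prems pp] obtain d1 where d1: "d1 > 0" and h1: "\<forall>A. adm M n k A \<longrightarrow>
      (\<exists>B. (\<forall>i<n. B i \<subseteq> A i \<and> real (card (B i)) \<ge> d1 * real (card (A i))) \<and> Qrs n \<phi> (fst p) (snd p) B)"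
    by blast
  have pL: "\<forall>p\<in>set L. \<exists>\<delta>>0. \<forall>A. adm M n k A \<longrightarrow>
      (\<exists>B. (\<forall>i<n. B i \<subseteq> A i \<and> real (card (B i)) \<ge> \<delta> * real (card (A i))) \<and> Qrs n \<phi> (fst p) (snd p) B)"
    using Cons.prems by (meson list.set_intros(2))
  from Cons.IH[OF pL] obtain d2 where d2: "d2 > 0" and h2: "\<forall>A. adm M n k A \<longrightarrow>
      (\<exists>B. (\<forall>i<n. B i \<subseteq> A i \<and> real (card (B i)) \<ge> d2 * real (card (A i))) \<and>
         (\<forall>p\<in>set L. Qrs n \<phi> (fst p) (snd p) B))"
    by blast
  show ?case
  proof (intro exI[of _ "d2 * d1"] conjI allI impI)
    show "0 < d2 * d1" using d1 d2 by simp
    fix A assume A: "adm M n k A"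
    from mp[OF spec[OF h1, of A] A] obtain B1 where B1: "\<forall>i<n. B1 i \<subseteq> A i \<and> real (card (B1 i)) \<ge> d1 * real (card (A i))"
      and Q1: "Qrs n \<phi> (fst p) (snd p) B1" by (elim exE conjE)
    have "adm M n k B1" unfolding adm_def
    proof (intro allI impI conjI)
      fix i assume i: "i < n"
      have "B1 i \<subseteq> A i" using B1 i by blast
      moreover have "finite (A i) \<and> A i \<subseteq> tuples M (k i)" using A i unfolding adm_def by blast
      ultimately show "finite (B1 i)" "B1 i \<subseteq> tuples M (k i)" using finite_subset by blast+
    qed
    from mp[OF spec[OF h2, of B1] this] obtain B2 where B2: "\<forall>i<n. B2 i \<subseteq> B1 i \<and> real (card (B2 i)) \<ge> d2 * real (card (B1 i))"
      and Q2: "\<forall>p\<in>set L. Qrs n \<phi> (fst p) (snd p) B2" by (elim exE conjE)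
    show "\<exists>B. (\<forall>i<n. B i \<subseteq> A i \<and> d2 * d1 * real (card (A i)) \<le> real (card (B i))) \<and>
          (\<forall>p\<in>set (p # L). Qrs n \<phi> (fst p) (snd p) B)"
    proof (intro exI[of _ B2] conjI allI impI ballI)
      fix i assume i: "i < n"
      show "B2 i \<subseteq> A i" using B1 B2 i by blast
      have "d2 * d1 * real (card (A i)) = d2 * (d1 * real (card (A i)))" by simp
      also have "\<dots> \<le> d2 * real (card (B1 i))" using B1 i d2 by (intro mult_left_mono) auto
      also have "\<dots> \<le> real (card (B2 i))" using B2 i by auto
      finally show "d2 * d1 * real (card (A i)) \<le> real (card (B2 i))" .
    next
      fix q assume "q \<in> set (p # L)"
      then consider "q = p" | "q \<in> set L" by auto
      then show "Qrs n \<phi> (fst q) (snd q) B2"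
      proof cases
        case 1
        have "\<forall>i<n. B2 i \<subseteq> B1 i" using B2 by blast
        then show ?thesis using Qrs_mono[OF Q1] 1 by blast
      next
        case 2
        then show ?thesis using Q2 by blast
      qed
    qed
  qed
qed

theorem mainTheorem12:
  fixes M :: "'m set" and n :: nat and k :: "nat \<Rightarrow> nat"
    and \<phi> :: "(nat \<Rightarrow> 'm list) \<Rightarrow> real"
  assumes range01: "\<And>a. a \<in> PiE {..<n} (\<lambda>i. tuples M (k i)) \<Longrightarrow> 0 \<le> \<phi> a \<and> \<phi> a \<le> 1"
  shows "strong_EH M n k \<phi> \<longleftrightarrow>
    (\<forall>r s::real. 0 \<le> r \<and> r < s \<and> s \<le> 1 \<longrightarrow>
       (\<exists>\<delta>>0. \<forall>A. (\<forall>i<n. finite (A i) \<and> A i \<subseteq> tuples M (k i)) \<longrightarrow>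
          (\<exists>B. (\<forall>i<n. B i \<subseteq> A i \<and> real (card (B i)) \<ge> \<delta> * real (card (A i))) \<and>
               ((\<forall>b\<in>PiE {..<n} B. \<phi> b < s) \<or> (\<forall>b\<in>PiE {..<n} B. \<phi> b > r)))))"
    (is "?L \<longleftrightarrow> ?R")
proof
  assume L: ?L
  show ?R
  proof (intro allI impI)
    fix r s :: real assume rs: "0 \<le> r \<and> r < s \<and> s \<le> 1"
    define e where "e = (s - r) / 3"
    have e: "e > 0" using rs by (simp add: e_def)
    note H0 = mp[OF spec[OF L[unfolded strong_EH_def], of e] e]
    from H0 obtain d where d: "d > 0" and H: "\<forall>A. (\<forall>i<n. finite (A i) \<and> A i \<subseteq> tuples M (k i)) \<longrightarrow>
        (\<exists>B. (\<forall>i<n. B i \<subseteq> A i \<and> real (card (B i)) \<ge> d * real (card (A i))) \<and>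
             (\<forall>a\<in>PiE {..<n} B. \<forall>a'\<in>PiE {..<n} B. \<bar>\<phi> a - \<phi> a'\<bar> \<le> e))"
      by blast
    show "\<exists>\<delta>>0. \<forall>A. (\<forall>i<n. finite (A i) \<and> A i \<subseteq> tuples M (k i)) \<longrightarrow>
          (\<exists>B. (\<forall>i<n. B i \<subseteq> A i \<and> real (card (B i)) \<ge> \<delta> * real (card (A i))) \<and>
               ((\<forall>b\<in>PiE {..<n} B. \<phi> b < s) \<or> (\<forall>b\<in>PiE {..<n} B. \<phi> b > r)))"
    proof (intro exI[of _ d] conjI allI impI)
      show "d > 0" by (rule d)
      fix A assume A: "\<forall>i<n. finite (A i) \<and> A i \<subseteq> tuples M (k i)"
      from mp[OF spec[OF H, of A] A] obtain B where B1: "\<forall>i<n. B i \<subseteq> A i \<and> real (card (B i)) \<ge> d * real (card (A i))"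
        and B2: "\<forall>a\<in>PiE {..<n} B. \<forall>a'\<in>PiE {..<n} B. \<bar>\<phi> a - \<phi> a'\<bar> \<le> e"
        by (elim exE conjE)
      have "(\<forall>b\<in>PiE {..<n} B. \<phi> b < s) \<or> (\<forall>b\<in>PiE {..<n} B. \<phi> b > r)"
      proof (cases "PiE {..<n} B = {}")
        case True then show ?thesis by auto
      next
        case False
        then obtain b0 where b0: "b0 \<in> PiE {..<n} B" by blast
        show ?thesis
        proof (cases "\<phi> b0 < (r + s) / 2")
          case True
          have "\<forall>b\<in>PiE {..<n} B. \<phi> b < s"
          proof
            fix b assume "b \<in> PiE {..<n} B"
            then have "\<bar>\<phi> b - \<phi> b0\<bar> \<le> e" using B2 b0 by blast
            then show "\<phi> b < s" using True rs unfolding e_def abs_le_iff by (simp add: field_simps)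
          qed
          then show ?thesis by blast
        next
          case False
          have "\<forall>b\<in>PiE {..<n} B. \<phi> b > r"
          proof
            fix b assume "b \<in> PiE {..<n} B"
            then have "\<bar>\<phi> b - \<phi> b0\<bar> \<le> e" using B2 b0 by blast
            then show "\<phi> b > r" using False rs unfolding e_def abs_le_iff by (simp add: field_simps)
          qed
          then show ?thesis by blast
        qed
      qed
      then show "\<exists>B. (\<forall>i<n. B i \<subseteq> A i \<and> real (card (B i)) \<ge> d * real (card (A i))) \<and>
               ((\<forall>b\<in>PiE {..<n} B. \<phi> b < s) \<or> (\<forall>b\<in>PiE {..<n} B. \<phi> b > r))"
        using B1 by blast
    qed
  qed
next
  assume R: ?R
  show ?L
    unfolding strong_EH_def
  proof (intro allI impI)
    fix e :: real assume e: "e > 0"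
    define m :: nat where "m = nat \<lceil>2 / e\<rceil> + 1"
    have m1: "m \<ge> 1" by (simp add: m_def)
    have "2 / e \<le> real m" unfolding m_def by linarith
    then have "2 \<le> e * real m" using e by (simp add: divide_le_eq mult.commute)
    then have me: "2 / real m \<le> e" using m1 by (simp add: divide_le_eq mult.commute)
    define L where "L = map (\<lambda>j. (real j / real m, real (Suc j) / real m)) [0..<m]"
    have "\<forall>p\<in>set L. \<exists>\<delta>>0. \<forall>A. adm M n k A \<longrightarrow>
      (\<exists>B. (\<forall>i<n. B i \<subseteq> A i \<and> real (card (B i)) \<ge> \<delta> * real (card (A i))) \<and> Qrs n \<phi> (fst p) (snd p) B)"
    proof
      fix p assume "p \<in> set L"
      then obtain j where j: "j < m" and p: "p = (real j / real m, real (Suc j) / real m)"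
        unfolding L_def by auto
      have "0 \<le> fst p \<and> fst p < snd p \<and> snd p \<le> 1" using j m1
        by (auto simp: p divide_strict_right_mono divide_le_eq)
      then show "\<exists>\<delta>>0. \<forall>A. adm M n k A \<longrightarrow>
      (\<exists>B. (\<forall>i<n. B i \<subseteq> A i \<and> real (card (B i)) \<ge> \<delta> * real (card (A i))) \<and> Qrs n \<phi> (fst p) (snd p) B)"
      proof -
        assume h: "0 \<le> fst p \<and> fst p < snd p \<and> snd p \<le> 1"
        from R[rule_format, OF h] show ?thesis unfolding adm_def Qrs_def by simp
      qed
    qed
    from iter[OF this] obtain d where d: "d > 0" and H: "\<forall>A. adm M n k A \<longrightarrow>
      (\<exists>B. (\<forall>i<n. B i \<subseteq> A i \<and> real (card (B i)) \<ge> d * real (card (A i))) \<and>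
         (\<forall>p\<in>set L. Qrs n \<phi> (fst p) (snd p) B))" by blast
    show "\<exists>\<delta>>0. \<forall>A. (\<forall>i<n. finite (A i) \<and> A i \<subseteq> tuples M (k i)) \<longrightarrow>
        (\<exists>B. (\<forall>i<n. B i \<subseteq> A i \<and> real (card (B i)) \<ge> \<delta> * real (card (A i))) \<and>
             (\<forall>a\<in>PiE {..<n} B. \<forall>a'\<in>PiE {..<n} B. \<bar>\<phi> a - \<phi> a'\<bar> \<le> e))"
    proof (intro exI[of _ d] conjI allI impI)
      show "d > 0" by (rule d)
      fix A assume A: "\<forall>i<n. finite (A i) \<and> A i \<subseteq> tuples M (k i)"
      have Aa: "adm M n k A" using A unfolding adm_def .
      from mp[OF spec[OF H, of A] Aa] obtain B where B1: "\<forall>i<n. B i \<subseteq> A i \<and> real (card (B i)) \<ge> d * real (card (A i))"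
        and B2: "\<forall>p\<in>set L. Qrs n \<phi> (fst p) (snd p) B"
        by (elim exE conjE)
      have sub: "PiE {..<n} B \<subseteq> PiE {..<n} (\<lambda>i. tuples M (k i))"
        using A B1 by (intro PiE_mono) auto
      have key: "\<phi> a - \<phi> a' \<le> 2 / real m" if a: "a \<in> PiE {..<n} B" and a': "a' \<in> PiE {..<n} B" for a a'
      proof (rule ccontr)
        assume C: "\<not> ?thesis"
        have ra: "0 \<le> \<phi> a \<and> \<phi> a \<le> 1" using range01 sub a by blast
        have ra': "0 \<le> \<phi> a' \<and> \<phi> a' \<le> 1" using range01 sub a' by blast
        have mpos: "real m > 0" using m1 by simp
        define j where "j = nat \<lfloor>real m * \<phi> a'\<rfloor>"
        have fl0: "\<lfloor>real m * \<phi> a'\<rfloor> \<ge> 0" using ra' mpos by simp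
        have j1: "real j \<le> real m * \<phi> a'" using fl0 unfolding j_def by linarith
        have j2: "real m * \<phi> a' < real j + 1" using fl0 unfolding j_def by linarith
        have Ca: "real m * \<phi> a > real m * \<phi> a' + 2"
          using C mpos by (simp add: field_simps)
        have "real m * \<phi> a \<le> real m" using ra mpos by simp
        then have "real j + 2 < real m" using Ca j1 by linarith
        then have jm: "Suc j < m" by linarith
        have "(real (Suc j) / real m, real (Suc (Suc j)) / real m) \<in> set L"
          unfolding L_def set_map using jm by (intro image_eqI[of _ _ "Suc j"]) auto
        then have "Qrs n \<phi> (fst (real (Suc j) / real m, real (Suc (Suc j)) / real m))
            (snd (real (Suc j) / real m, real (Suc (Suc j)) / real m)) B"
          by (rule bspec[OF B2])
        then have Q: "Qrs n \<phi> (real (Suc j) / real m) (real (Suc (Suc j)) / real m) B"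
          by (simp only: fst_conv snd_conv)
        have "\<phi> a \<ge> real (Suc (Suc j)) / real m" using Ca j1 mpos
          by (simp add: divide_le_eq mult.commute)
        moreover have "\<phi> a' \<le> real (Suc j) / real m" using j2 mpos
          by (simp add: le_divide_eq mult.commute)
        ultimately show False
        proof -
          assume ge: "\<phi> a \<ge> real (Suc (Suc j)) / real m" and le: "\<phi> a' \<le> real (Suc j) / real m"
          from Q consider "\<forall>b\<in>PiE {..<n} B. \<phi> b < real (Suc (Suc j)) / real m"
            | "\<forall>b\<in>PiE {..<n} B. \<phi> b > real (Suc j) / real m" unfolding Qrs_def by blast
          then show False
          proof cases
            case 1 then have "\<phi> a < real (Suc (Suc j)) / real m" using a by blast
            then show False using ge by linarith
          next
            case 2 then have "\<phi> a' > real (Suc j) / real m" using a' by blast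
            then show False using le by linarith
          qed
        qed
      qed
      show "\<exists>B. (\<forall>i<n. B i \<subseteq> A i \<and> real (card (B i)) \<ge> d * real (card (A i))) \<and>
             (\<forall>a\<in>PiE {..<n} B. \<forall>a'\<in>PiE {..<n} B. \<bar>\<phi> a - \<phi> a'\<bar> \<le> e)"
      proof (intro exI[of _ B] conjI ballI)
        show "\<forall>i<n. B i \<subseteq> A i \<and> real (card (B i)) \<ge> d * real (card (A i))" by (rule B1)
        fix a a' assume "a \<in> PiE {..<n} B" "a' \<in> PiE {..<n} B"
        then have "\<phi> a - \<phi> a' \<le> 2 / real m" "\<phi> a' - \<phi> a \<le> 2 / real m" using key by auto
        then show "\<bar>\<phi> a - \<phi> a'\<bar> \<le> e" using me by linarith
      qed
    qed
  qed
qed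

end
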